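(* Let $\mathbf{C}_{\mathrm{ATM}}$ be the class of all absolute team independence structures $\mathcal{I}_X$ (for all teams $X$, with arbitrary domain $I$ and arbitrary value set $M$). Then for every set $\Sigma$ of absolute independence atoms over $V$ and every absolute independence atom $\phi$ over $V$, $$\Sigma\vdash_{\mathcal{AI}}\phi \iff \Sigma\models_{\mathbf{C}_{\mathrm{ATM}}}\phi .$$
   Context: Fix a countably infinite set $V$ of variables. An absolute independence atom over $V$ is an expression $\bot(\vec x)$ where $\vec x$ is a finite (possibly empty) sequence of pairwise distinct variables from $V$. Derivability $\Sigma\vdash_{\mathcal{AI}}\phi$ means that $\phi$ belongs to the smallest set of absolute independence atoms containing $\Sigma$ and closed under the rules: (a) $\bot(\emptyset)$ (empty sequence) is derivable; (b) from $\bot(\vec x\vec y)$ infer $\bot(\vec x)$ (here $\vec x\vec y$ is concatenation); (c) from $\bot(\vec x)$ infer $\bot(\vec y)$ for any permutation $\vec y$ of $\vec x$. An absolute independence structure is a pair $(I,\mathcal{A})$ with $I$ a nonempty set and $\mathcal{A}$ a set of finite subsets of $I$ closed under subsets. A team with domain $I$ and values in $M$ is a set $X$ of functions $s:I\to M$. For a finite $\mathbf{x}\subseteq I$ and $x_i\in\mathbf{x}$ let $\mathbf{x}-_X x_i=\{x_j\in\mathbf{x} : \exists s\in X\ (s(x_i)\neq s(x_j))\}$; for $s,s'\in X$ and a set $\mathbf{z}\subseteq I$, $s(\mathbf{z})=s'(\mathbf{z})$ means $s(z)=s'(z)$ for all $z\in\mathbf{z}$. Let $\mathcal{A}_X$ be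 the set of finite $\mathbf{x}\subseteq I$ such that for every $x_i\in\mathbf{x}$: (1) for all $s,s'\in X$ there is $s''\in X$ with $s''(x_i)=s(x_i)$ and $s''(\mathbf{x}-_X x_i)=s'(\mathbf{x}-_X x_i)$, and (2) there are $s,s'\in X$ with $s(x_i)\neq s'(x_i)$. The absolute team independence structure of $X$ is $\mathcal{I}_X=(I,\mathcal{A}_X)$. Semantics: an assignment into $(I,\mathcal{A})$ is a map $s:V\to I$; for a sequence $\vec x=(x_0,\dots,x_{n-1})$ put $s(\vec x)=\{s(x_0),\dots,s(x_{n-1})\}$; $s$ satisfies $\bot(\vec x)$ in $(I,\mathcal{A})$ iff $s(\vec x)\in\mathcal{A}$. For a class $\mathbf{C}$ of such structures, $\Sigma\models_{\mathbf{C}}\phi$ means every assignment into every structure in $\mathbf{C}$ satisfying all atoms of $\Sigma$ also satisfies $\phi$. *)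

theory Defs
  imports Main "HOL-Library.Multiset"
begin

text \<open>Variables V: the countably infinite type nat.
  An absolute independence atom is represented by the list of its variables
  (required to be distinct).\<close>

inductive AI_deriv :: "nat list set \<Rightarrow> nat list \<Rightarrow> bool" for \<Sigma> where
  ax: "\<phi> \<in> \<Sigma> \<Longrightarrow> AI_deriv \<Sigma> \<phi>"
| empty: "AI_deriv \<Sigma> []"
| proj: "AI_deriv \<Sigma> (xs @ ys) \<Longrightarrow> AI_deriv \<Sigma> xs"
| perm: "AI_deriv \<Sigma> xs \<Longrightarrow> mset ys = mset xs \<Longrightarrow> AI_deriv \<Sigma> ys"

text \<open>Teams with domain I = UNIV :: 'i and values in 'm.\<close>

definition team_minus :: "('i \<Rightarrow> 'm) set \<Rightarrow> 'i set \<Rightarrow> 'i \<Rightarrow> 'i set" where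
  "team_minus X x xi = {xj \<in> x. \<exists>s\<in>X. s xi \<noteq> s xj}"

definition team_A :: "('i \<Rightarrow> 'm) set \<Rightarrow> 'i set set" where
  "team_A X = {x. finite x \<and>
     (\<forall>xi\<in>x.
        (\<forall>s\<in>X. \<forall>s'\<in>X. \<exists>s''\<in>X. s'' xi = s xi \<and> (\<forall>z\<in>team_minus X x xi. s'' z = s' z)) \<and>
        (\<exists>s\<in>X. \<exists>s'\<in>X. s xi \<noteq> s' xi))}"

definition sat_atom :: "'i set set \<Rightarrow> (nat \<Rightarrow> 'i) \<Rightarrow> nat list \<Rightarrow> bool" where
  "sat_atom A s \<phi> \<longleftrightarrow> s ` set \<phi> \<in> A"

text \<open>Semantic consequence over all absolute team independence structures whose
  domain is the type 'i and whose value set is the type 'm.\<close>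

definition atm_conseq :: "'i itself \<Rightarrow> 'm itself \<Rightarrow> nat list set \<Rightarrow> nat list \<Rightarrow> bool" where
  "atm_conseq _ _ \<Sigma> \<phi> \<longleftrightarrow>
     (\<forall>(X :: ('i \<Rightarrow> 'm) set) (s :: nat \<Rightarrow> 'i).
        (\<forall>\<psi>\<in>\<Sigma>. sat_atom (team_A X) s \<psi>) \<longrightarrow> sat_atom (team_A X) s \<phi>)"

end

theory Submission
  imports Defs
begin

lemma team_A_empty: "{} \<in> team_A X"
  by (simp add: team_A_def)

lemma team_A_down:
  assumes "x \<in> team_A X" "y \<subseteq> x"
  shows "y \<in> team_A X"
proof -
  have fy: "finite y" using assms finite_subset unfolding team_A_def by blast
  have sub: "team_minus X y xi \<subseteq> team_minus X x xi" for xi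
    using assms(2) unfolding team_minus_def by blast
  have "\<forall>xi\<in>y. (\<forall>s\<in>X. \<forall>s'\<in>X. \<exists>s''\<in>X. s'' xi = s xi \<and> (\<forall>z\<in>team_minus X y xi. s'' z = s' z)) \<and>
        (\<exists>s\<in>X. \<exists>s'\<in>X. s xi \<noteq> s' xi)"
  proof
    fix xi assume xi: "xi \<in> y"
    hence xix: "xi \<in> x" using assms(2) by blast
    have A: "\<forall>s\<in>X. \<forall>s'\<in>X. \<exists>s''\<in>X. s'' xi = s xi \<and> (\<forall>z\<in>team_minus X x xi. s'' z = s' z)"
      and B: "\<exists>s\<in>X. \<exists>s'\<in>X. s xi \<noteq> s' xi"
      using assms(1) xix unfolding team_A_def by blast+
    show "(\<forall>s\<in>X. \<forall>s'\<in>X. \<exists>s''\<in>X. s'' xi = s xi \<and> (\<forall>z\<in>team_minus X y xi. s'' z = s' z)) \<and>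
        (\<exists>s\<in>X. \<exists>s'\<in>X. s xi \<noteq> s' xi)"
      using A B sub by blast
  qed
  thus ?thesis using fy unfolding team_A_def by blast
qed

lemma soundness:
  assumes "AI_deriv \<Sigma> \<phi>"
  shows "atm_conseq TYPE('i) TYPE('m) \<Sigma> \<phi>"
  unfolding atm_conseq_def
proof (intro allI impI)
  fix X :: "('i \<Rightarrow> 'm) set" and s :: "nat \<Rightarrow> 'i"
  assume H: "\<forall>\<psi>\<in>\<Sigma>. sat_atom (team_A X) s \<psi>"
  from assms show "sat_atom (team_A X) s \<phi>"
  proof (induction rule: AI_deriv.induct)
    case (ax \<phi>) then show ?case using H by blast
  next
    case empty then show ?case by (simp add: sat_atom_def team_A_empty)
  next
    case (proj xs ys)
    have "s ` set xs \<subseteq> s ` set (xs @ ys)" by auto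
    then show ?case using team_A_down proj.IH unfolding sat_atom_def by blast
  next
    case (perm xs ys)
    have "set ys = set xs" using perm by (metis set_mset_mset)
    then show ?case using perm by (simp add: sat_atom_def)
  qed
qed

lemma deriv_sub:
  assumes "AI_deriv \<Sigma> \<psi>" "distinct \<psi>" "distinct \<phi>" "set \<phi> \<subseteq> set \<psi>"
  shows "AI_deriv \<Sigma> \<phi>"
proof -
  define r where "r = filter (\<lambda>x. x \<notin> set \<phi>) \<psi>"
  have d: "distinct (\<phi> @ r)" using assms unfolding r_def by auto
  have st: "set (\<phi> @ r) = set \<psi>" using assms unfolding r_def by auto
  have "mset (\<phi> @ r) = mset \<psi>" using d st assms(2) by (metis mset_set_set)
  hence "AI_deriv \<Sigma> (\<phi> @ r)" using assms(1) AI_deriv.perm by blast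
  thus ?thesis by (rule AI_deriv.proj)
qed

definition fixp :: "nat set \<Rightarrow> nat \<Rightarrow> (nat \<Rightarrow> nat) \<Rightarrow> (nat \<Rightarrow> nat)" where
  "fixp S a h = h(a := (3 - (\<Sum>i\<in>S-{a}. h i) mod 3) mod 3)"

definition TX :: "nat set \<Rightarrow> (nat \<Rightarrow> nat) set" where
  "TX S = {f. (\<forall>i. f i < 3) \<and> (\<Sum>i\<in>S. f i) mod 3 = 0}"

lemma mod3_fix: "((3 - (T::nat) mod 3) mod 3 + T) mod 3 = 0"
proof -
  define q r where "q = T div 3" and "r = T mod 3"
  have T: "T = 3*q + r" unfolding q_def r_def by simp
  have r: "r < 3" unfolding r_def by simp
  have "T mod 3 = r" using T r by simp
  moreover have "r = 0 \<or> r = 1 \<or> r = 2" using r by auto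
  ultimately show ?thesis using T by auto
qed

lemma fixp_in:
  assumes "finite S" "a \<in> S" "\<forall>i. h i < 3"
  shows "fixp S a h \<in> TX S"
proof -
  have "(\<Sum>i\<in>S. fixp S a h i) = fixp S a h a + (\<Sum>i\<in>S-{a}. fixp S a h i)"
    using assms by (simp add: sum.remove)
  also have "(\<Sum>i\<in>S-{a}. fixp S a h i) = (\<Sum>i\<in>S-{a}. h i)"
    by (rule sum.cong) (auto simp: fixp_def)
  finally have "(\<Sum>i\<in>S. fixp S a h i) = (3 - (\<Sum>i\<in>S-{a}. h i) mod 3) mod 3 + (\<Sum>i\<in>S-{a}. h i)"
    by (simp add: fixp_def)
  hence "(\<Sum>i\<in>S. fixp S a h i) mod 3 = 0" using mod3_fix by metis
  moreover have "\<forall>i. fixp S a h i < 3" using assms(3) by (auto simp: fixp_def)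
  ultimately show ?thesis by (simp add: TX_def)
qed

lemma team_minus_sub: "team_minus X x xi \<subseteq> x - {xi}"
  unfolding team_minus_def by blast

lemma in_TX:
  assumes "finite S" "S \<noteq> {}" "x \<subseteq> UNIV" "finite x" "\<not> S \<subseteq> x"
  shows "x \<in> team_A (TX S)"
proof -
  obtain a where a: "a \<in> S" "a \<notin> x" using assms(5) by blast
  have P: "\<forall>xi\<in>x. (\<forall>s\<in>TX S. \<forall>s'\<in>TX S. \<exists>s''\<in>TX S. s'' xi = s xi \<and> (\<forall>z\<in>team_minus (TX S) x xi. s'' z = s' z)) \<and> (\<exists>s\<in>TX S. \<exists>s'\<in>TX S. s xi \<noteq> s' xi)"
  proof (rule ballI, rule conjI)
    fix xi assume xi: "xi \<in> x"
    hence ne: "xi \<noteq> a" using a by blast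
    show "\<forall>s\<in>TX S. \<forall>s'\<in>TX S. \<exists>s''\<in>TX S. s'' xi = s xi \<and> (\<forall>z\<in>team_minus (TX S) x xi. s'' z = s' z)"
    proof (intro ballI)
      fix s s' assume s: "s \<in> TX S" and s': "s' \<in> TX S"
      define h where "h = (\<lambda>i. if i = xi then s xi else s' i)"
      have "\<forall>i. h i < 3" using s s' unfolding h_def TX_def by auto
      hence "fixp S a h \<in> TX S" using fixp_in assms(1) a(1) by blast
      moreover have "fixp S a h xi = s xi" using ne by (simp add: fixp_def h_def)
      moreover have "\<forall>z\<in>team_minus (TX S) x xi. fixp S a h z = s' z"
        using a(2) team_minus_sub[of "TX S" x xi] unfolding fixp_def h_def by auto
      ultimately show "\<exists>s''\<in>TX S. s'' xi = s xi \<and> (\<forall>z\<in>team_minus (TX S) x xi. s'' z = s' z)"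
        by blast
    qed
    define h where "h = (\<lambda>i::nat. if i = xi then 1 else (0::nat))"
    have "fixp S a h \<in> TX S" using fixp_in assms(1) a(1) by (simp add: h_def)
    moreover have "fixp S a (\<lambda>_. 0) \<in> TX S" using fixp_in assms(1) a(1) by simp
    moreover have "fixp S a h xi \<noteq> fixp S a (\<lambda>_. 0) xi" using ne by (simp add: fixp_def h_def)
    ultimately show "\<exists>s\<in>TX S. \<exists>s'\<in>TX S. s xi \<noteq> s' xi" by blast
  qed
  show ?thesis unfolding team_A_def by (rule CollectI, rule conjI[OF assms(4) P])
qed

lemma sum_two:
  assumes "finite S" "a \<in> S" "b \<in> S" "a \<noteq> b"
  shows "(\<Sum>i\<in>S. if i = a then 1 else if i = b then 2 else (0::nat)) = 3"
proof -
  define f where "f = (\<lambda>i. if i = a then 1 else if i = b then 2 else (0::nat))"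
  have 1: "(\<Sum>i\<in>S. f i) = f a + (\<Sum>i\<in>S-{a}. f i)" using assms by (simp add: sum.remove)
  have 2: "(\<Sum>i\<in>S-{a}. f i) = f b + (\<Sum>i\<in>S-{a}-{b}. f i)" using assms by (intro sum.remove) auto
  have 3: "(\<Sum>i\<in>S-{a}-{b}. f i) = 0" by (rule sum.neutral) (auto simp: f_def)
  show ?thesis using 1 2 3 assms(4) unfolding f_def by simp
qed

lemma notin_TX:
  assumes "finite S" "S \<noteq> {}"
  shows "S \<notin> team_A (TX S)"
proof
  assume H: "S \<in> team_A (TX S)"
  obtain a where a: "a \<in> S" using assms(2) by blast
  have A: "\<forall>s\<in>TX S. \<forall>s'\<in>TX S. \<exists>s''\<in>TX S. s'' a = s a \<and> (\<forall>z\<in>team_minus (TX S) S a. s'' z = s' z)"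
    and B: "\<exists>s\<in>TX S. \<exists>s'\<in>TX S. s a \<noteq> s' a"
    using H a unfolding team_A_def by blast+
  show False
  proof (cases "S = {a}")
    case True
    have Z: "f a = 0" if "f \<in> TX S" for f
    proof -
      have "f a < 3" "(\<Sum>i\<in>S. f i) mod 3 = 0" using that unfolding TX_def by auto
      hence "f a mod 3 = 0" "f a < 3" using True by simp_all
      thus ?thesis by simp
    qed
    from B obtain s s' where "s \<in> TX S" "s' \<in> TX S" "s a \<noteq> s' a" by blast
    thus False using Z[of s] Z[of s'] by simp
  next
    case False
    then obtain b where b: "b \<in> S" "b \<noteq> a" using a by blast
    define s where "s = (\<lambda>i::nat. if i = a then 1 else if i = b then 2 else (0::nat))"
    have ssum: "(\<Sum>i\<in>S. s i) = 3" unfolding s_def using sum_two[OF assms(1)] a(1) b by auto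
    have sX: "s \<in> TX S" unfolding TX_def using ssum by (auto simp: s_def)
    have zX: "(\<lambda>_. 0) \<in> TX S" unfolding TX_def by simp
    obtain s'' where s'': "s'' \<in> TX S" "s'' a = 1"
      "\<forall>z\<in>team_minus (TX S) S a. s'' z = 0"
    proof -
      from A[rule_format, OF sX zX] obtain s'' where "s'' \<in> TX S" "s'' a = s a"
        "\<forall>z\<in>team_minus (TX S) S a. s'' z = 0" by auto
      moreover have "s a = 1" by (simp add: s_def)
      ultimately show ?thesis using that by simp
    qed
    have tm: "S - {a} \<subseteq> team_minus (TX S) S a"
    proof
      fix c assume c: "c \<in> S - {a}"
      define t where "t = (\<lambda>i::nat. if i = a then 1 else if i = c then 2 else (0::nat))"
      have "(\<Sum>i\<in>S. t i) = 3" unfolding t_def using sum_two[OF assms(1)] a(1) c by auto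
      hence "t \<in> TX S" unfolding TX_def by (auto simp: t_def)
      moreover have "t a \<noteq> t c" using c by (simp add: t_def)
      ultimately show "c \<in> team_minus (TX S) S a" using c unfolding team_minus_def by blast
    qed
    have "(\<Sum>i\<in>S. s'' i) = s'' a + (\<Sum>i\<in>S-{a}. s'' i)"
      using assms(1) a by (simp add: sum.remove)
    also have "(\<Sum>i\<in>S-{a}. s'' i) = 0" using s''(3) tm by (intro sum.neutral) blast
    finally have "(\<Sum>i\<in>S. s'' i) = 1" using s''(2) by simp
    thus False using s''(1) unfolding TX_def by simp
  qed
qed

lemma completeness:
  assumes "\<forall>\<psi>\<in>\<Sigma>. distinct \<psi>" "distinct \<phi>" "atm_conseq TYPE(nat) TYPE(nat) \<Sigma> \<phi>"
  shows "AI_deriv \<Sigma> \<phi>"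
proof (rule ccontr)
  assume nd: "\<not> AI_deriv \<Sigma> \<phi>"
  define S where "S = set \<phi>"
  have ne: "S \<noteq> {}" using nd AI_deriv.empty unfolding S_def by auto
  have fS: "finite S" unfolding S_def by simp
  have "\<forall>\<psi>\<in>\<Sigma>. sat_atom (team_A (TX S)) id \<psi>"
  proof
    fix \<psi> assume p: "\<psi> \<in> \<Sigma>"
    have "\<not> S \<subseteq> set \<psi>"
    proof
      assume "S \<subseteq> set \<psi>"
      hence "AI_deriv \<Sigma> \<phi>" using deriv_sub[OF AI_deriv.ax[OF p]] assms(1,2) p unfolding S_def by blast
      thus False using nd by contradiction
    qed
    thus "sat_atom (team_A (TX S)) id \<psi>"
      unfolding sat_atom_def using in_TX[OF fS ne] by simp
  qed
  hence "sat_atom (team_A (TX S)) id \<phi>" using assms(3) unfolding atm_conseq_def by blast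
  thus False using notin_TX[OF fS ne] unfolding sat_atom_def S_def by simp
qed

theorem mainTheorem1:
  fixes \<Sigma> :: "nat list set" and \<phi> :: "nat list"
  assumes "\<forall>\<psi>\<in>\<Sigma>. distinct \<psi>" and "distinct \<phi>"
  shows "(AI_deriv \<Sigma> \<phi> \<longleftrightarrow> atm_conseq TYPE(nat) TYPE(nat) \<Sigma> \<phi>)
       \<and> (AI_deriv \<Sigma> \<phi> \<longrightarrow> atm_conseq TYPE('i) TYPE('m) \<Sigma> \<phi>)"
proof (intro conjI iffI impI)
  assume "AI_deriv \<Sigma> \<phi>"
  thus "atm_conseq TYPE(nat) TYPE(nat) \<Sigma> \<phi>" by (rule soundness)
next
  assume "atm_conseq TYPE(nat) TYPE(nat) \<Sigma> \<phi>"
  thus "AI_deriv \<Sigma> \<phi>" by (rule completeness[OF assms])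
next
  assume "AI_deriv \<Sigma> \<phi>"
  thus "atm_conseq TYPE('i) TYPE('m) \<Sigma> \<phi>" by (rule soundness)
qed

end
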